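(* Let $X$ be a shift space, let $n\ge1$, $m\ge0$, and let $V\subseteq\mathcal L(X)$ be a finite $X$-maximal prefix code. If $\mathcal E_{\mathcal L_n(X),V}(w)$ is a tree for every $w\in\mathcal L_{\ge m}(X)$, then for every $w\in\mathcal L_{\ge m}(X)$ and every $\ell\in\mathcal L_{\ge n-1}(X)$ with $\ell w\in\mathcal L(X)$, the graph $\mathcal E_{A,V}(\ell w)$ is a tree.
   Context: $A$ is a finite alphabet; a shift space is a closed shift-invariant subset $X\subseteq A^{\mathbb Z}$; $\mathcal L(X)$ is its set of finite factors, $\mathcal L_n(X)=\mathcal L(X)\cap A^n$, $\mathcal L_{\ge n}(X)=\bigcup_{k\ge n}\mathcal L_k(X)$. A prefix code is a set of words none of which is a proper prefix of another; a prefix code $V\subseteq\mathcal L(X)$ is $X$-maximal if it is not properly contained in a prefix code contained in $\mathcal L(X)$. For $U,V\subseteq A^*$ and $w\in\mathcal L(X)$, let $L_U(w)=\{u\in U: uw\in\mathcal L(X)\}$ and $R_V(w)=\{v\in V: wv\in\mathcal L(X)\}$; the generalized extension graph $\mathcal E_{U,V}(w)$ is the undirected bipartite graph with vertex set the disjoint union of $L_U(w)$ and $R_V(w)$ and an edge $(u,v)$ iff $uwv\in\mathcal L(X)$. (Here $A$ denotes the set of one-letter words.) *)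

theory Defs
  imports "HOL-Analysis.Analysis" "HOL-Library.Sublist"
begin

definition shift :: "(int \<Rightarrow> 'a) \<Rightarrow> (int \<Rightarrow> 'a)" where
  "shift x = (\<lambda>i. x (i + 1))"

definition shift_space :: "(int \<Rightarrow> 'a::finite) set \<Rightarrow> bool" where
  "shift_space X \<longleftrightarrow>
     closedin (product_topology (\<lambda>_. discrete_topology (UNIV :: 'a set)) (UNIV :: int set)) X
     \<and> shift ` X = X"

text \<open>Finite factors (the empty word included when X is nonempty).\<close>
definition lang :: "(int \<Rightarrow> 'a) set \<Rightarrow> 'a list set" where
  "lang X = {w. \<exists>x\<in>X. \<exists>i::int. w = map (\<lambda>j. x (i + int j)) [0..<length w]}"

definition lang_n :: "(int \<Rightarrow> 'a) set \<Rightarrow> nat \<Rightarrow> 'a list set" where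
  "lang_n X n = {w \<in> lang X. length w = n}"

definition lang_ge :: "(int \<Rightarrow> 'a) set \<Rightarrow> nat \<Rightarrow> 'a list set" where
  "lang_ge X n = {w \<in> lang X. n \<le> length w}"

definition letters :: "'a list set" where
  "letters = {[a] | a. True}"

definition prefix_code :: "'a list set \<Rightarrow> bool" where
  "prefix_code V \<longleftrightarrow> (\<forall>u\<in>V. \<forall>v\<in>V. \<not> strict_prefix u v)"

definition X_maximal_prefix_code :: "(int \<Rightarrow> 'a) set \<Rightarrow> 'a list set \<Rightarrow> bool" where
  "X_maximal_prefix_code X V \<longleftrightarrow> prefix_code V \<and> V \<subseteq> lang X \<and>
     \<not> (\<exists>W. prefix_code W \<and> W \<subseteq> lang X \<and> V \<subset> W)"

definition L_ext :: "(int \<Rightarrow> 'a) set \<Rightarrow> 'a list set \<Rightarrow> 'a list \<Rightarrow> 'a list set" where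
  "L_ext X U w = {u \<in> U. u @ w \<in> lang X}"

definition R_ext :: "(int \<Rightarrow> 'a) set \<Rightarrow> 'a list set \<Rightarrow> 'a list \<Rightarrow> 'a list set" where
  "R_ext X V w = {v \<in> V. w @ v \<in> lang X}"

text \<open>Generalized extension graph E_{U,V}(w): vertices Inl u (u in L_U(w)) and
  Inr v (v in R_V(w)); undirected edges {Inl u, Inr v} iff u w v in L(X).\<close>

definition ext_verts :: "(int \<Rightarrow> 'a) set \<Rightarrow> 'a list set \<Rightarrow> 'a list set \<Rightarrow> 'a list
    \<Rightarrow> ('a list + 'a list) set" where
  "ext_verts X U V w = Inl ` L_ext X U w \<union> Inr ` R_ext X V w"

definition ext_adj :: "(int \<Rightarrow> 'a) set \<Rightarrow> 'a list set \<Rightarrow> 'a list set \<Rightarrow> 'a list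
    \<Rightarrow> ('a list + 'a list) \<Rightarrow> ('a list + 'a list) \<Rightarrow> bool" where
  "ext_adj X U V w p q \<longleftrightarrow> p \<in> ext_verts X U V w \<and> q \<in> ext_verts X U V w \<and>
     (\<exists>u v. ((p = Inl u \<and> q = Inr v) \<or> (p = Inr v \<and> q = Inl u)) \<and> u @ w @ v \<in> lang X)"

definition ug_connected :: "'v set \<Rightarrow> ('v \<Rightarrow> 'v \<Rightarrow> bool) \<Rightarrow> bool" where
  "ug_connected Vs E \<longleftrightarrow> Vs \<noteq> {} \<and>
     (\<forall>p\<in>Vs. \<forall>q\<in>Vs. (\<lambda>a b. a \<in> Vs \<and> b \<in> Vs \<and> E a b)\<^sup>*\<^sup>* p q)"

definition ug_cycle :: "'v set \<Rightarrow> ('v \<Rightarrow> 'v \<Rightarrow> bool) \<Rightarrow> 'v list \<Rightarrow> bool" where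
  "ug_cycle Vs E cs \<longleftrightarrow> 3 \<le> length cs \<and> distinct cs \<and> set cs \<subseteq> Vs \<and>
     (\<forall>i < length cs - 1. E (cs ! i) (cs ! Suc i)) \<and> E (last cs) (hd cs)"

definition ug_tree :: "'v set \<Rightarrow> ('v \<Rightarrow> 'v \<Rightarrow> bool) \<Rightarrow> bool" where
  "ug_tree Vs E \<longleftrightarrow> ug_connected Vs E \<and> \<not> (\<exists>cs. ug_cycle Vs E cs)"

definition ext_graph_is_tree :: "(int \<Rightarrow> 'a) set \<Rightarrow> 'a list set \<Rightarrow> 'a list set \<Rightarrow> 'a list \<Rightarrow> bool" where
  "ext_graph_is_tree X U V w = ug_tree (ext_verts X U V w) (ext_adj X U V w)"

end

theory Submission
  imports Defs
begin

lemma lang_suffix: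
  assumes "u @ z \<in> lang X" shows "z \<in> lang X"
proof -
  from assms obtain x i where x: "x \<in> X" and e: "u @ z = map (\<lambda>j. x (i + int j)) [0..<length (u @ z)]"
    unfolding lang_def by blast
  have "z = map (\<lambda>j. x (i + int (length u) + int j)) [0..<length z]"
  proof (rule nth_equalityI)
    fix k assume k: "k < length z"
    have "(u @ z) ! (length u + k) = x (i + int (length u + k))"
      using k by (subst e) (simp del: upt_Suc)
    thus "z ! k = map (\<lambda>j. x (i + int (length u) + int j)) [0..<length z] ! k"
      using k by (simp add: nth_append add.assoc)
  qed simp
  thus ?thesis using x unfolding lang_def by blast
qed

lemma lang_prefix:
  assumes "u @ z \<in> lang X" shows "u \<in> lang X"
proof -
  from assms obtain x i where x: "x \<in> X" and e: "u @ z = map (\<lambda>j. x (i + int j)) [0..<length (u @ z)]"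
    unfolding lang_def by blast
  have "u = map (\<lambda>j. x (i + int j)) [0..<length u]"
  proof (rule nth_equalityI)
    fix k assume k: "k < length u"
    have "(u @ z) ! k = x (i + int k)"
      using k by (subst e) (simp del: upt_Suc)
    thus "u ! k = map (\<lambda>j. x (i + int j)) [0..<length u] ! k"
      using k by (simp add: nth_append)
  qed simp
  thus ?thesis using x unfolding lang_def by blast
qed

lemma lang_left_ext:
  assumes "z \<in> lang X" shows "\<exists>u. length u = k \<and> u @ z \<in> lang X"
proof -
  from assms obtain x i where x: "x \<in> X" and e: "z = map (\<lambda>j. x (i + int j)) [0..<length z]"
    unfolding lang_def by blast
  define u where "u = map (\<lambda>j. x (i - int k + int j)) [0..<k]"
  have "u @ z = map (\<lambda>j. x ((i - int k) + int j)) [0..<length (u @ z)]"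
  proof (rule nth_equalityI)
    fix t assume t: "t < length (u @ z)"
    show "(u @ z) ! t = map (\<lambda>j. x ((i - int k) + int j)) [0..<length (u @ z)] ! t"
    proof (cases "t < k")
      case True thus ?thesis using t by (simp add: u_def nth_append)
    next
      case False
      hence "(u @ z) ! t = z ! (t - k)" by (simp add: u_def nth_append)
      also have "\<dots> = x (i + int (t - k))"
      proof -
        have tk: "t - k < length z" using t False by (simp add: u_def)
        show ?thesis by (subst e) (simp add: tk del: upt_Suc)
      qed
      finally show ?thesis using t False by (simp add: u_def algebra_simps)
    qed
  qed simp
  hence "u @ z \<in> lang X" using x unfolding lang_def by blast
  moreover have "length u = k" by (simp add: u_def)
  ultimately show ?thesis by blast
qed

lemma rtranclp_image:
  assumes "(\<lambda>a b. a \<in> V2 \<and> b \<in> V2 \<and> E2 a b)\<^sup>*\<^sup>* p q" "g ` V2 = V1"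
    "\<And>a b. a\<in>V2 \<Longrightarrow> b\<in>V2 \<Longrightarrow> E2 a b \<Longrightarrow> E1 (g a) (g b)"
  shows "(\<lambda>a b. a \<in> V1 \<and> b \<in> V1 \<and> E1 a b)\<^sup>*\<^sup>* (g p) (g q)"
  using assms(1)
proof (induction rule: rtranclp_induct)
  case base thus ?case by simp
next
  case (step y z)
  hence "(\<lambda>a b. a \<in> V1 \<and> b \<in> V1 \<and> E1 a b) (g y) (g z)" using assms(2,3) by blast
  with step(3) show ?case by (rule rtranclp.rtrancl_into_rtrancl)
qed

lemma conn_image:
  assumes "ug_connected V2 E2" "g ` V2 = V1"
    "\<And>a b. a\<in>V2 \<Longrightarrow> b\<in>V2 \<Longrightarrow> E2 a b \<Longrightarrow> E1 (g a) (g b)"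
  shows "ug_connected V1 E1"
  unfolding ug_connected_def
proof (intro conjI ballI)
  show "V1 \<noteq> {}" using assms(1,2) unfolding ug_connected_def by blast
next
  fix p q assume "p \<in> V1" "q \<in> V1"
  then obtain p' q' where "p' \<in> V2" "q' \<in> V2" "p = g p'" "q = g q'" using assms(2) by blast
  thus "(\<lambda>a b. a \<in> V1 \<and> b \<in> V1 \<and> E1 a b)\<^sup>*\<^sup>* p q"
    using rtranclp_image[of V2 E2 p' q' g V1 E1, OF _ assms(2,3)] assms(1) unfolding ug_connected_def by blast
qed

lemma acyc_embed:
  assumes "\<not>(\<exists>cs. ug_cycle V2 E2 cs)" "inj_on f V1" "f ` V1 \<subseteq> V2"
    "\<And>a b. a\<in>V1 \<Longrightarrow> b\<in>V1 \<Longrightarrow> E1 a b \<Longrightarrow> E2 (f a) (f b)"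
  shows "\<not>(\<exists>cs. ug_cycle V1 E1 cs)"
proof
  assume "\<exists>cs. ug_cycle V1 E1 cs"
  then obtain cs where c: "ug_cycle V1 E1 cs" by blast
  have ne: "cs \<noteq> []" using c unfolding ug_cycle_def by auto
  have sub: "set cs \<subseteq> V1" using c unfolding ug_cycle_def by auto
  have "ug_cycle V2 E2 (map f cs)"
    unfolding ug_cycle_def
  proof (intro conjI allI impI)
    show "3 \<le> length (map f cs)" using c unfolding ug_cycle_def by simp
    show "distinct (map f cs)" using c sub assms(2) unfolding ug_cycle_def
      by (simp add: distinct_map inj_on_subset)
    show "set (map f cs) \<subseteq> V2" using sub assms(3) by auto
  next
    fix i assume i: "i < length (map f cs) - 1"
    hence "E1 (cs ! i) (cs ! Suc i)" using c unfolding ug_cycle_def by simp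
    moreover have "cs ! i \<in> V1" "cs ! Suc i \<in> V1" using i sub by auto
    ultimately show "E2 (map f cs ! i) (map f cs ! Suc i)" using i assms(4) by simp
  next
    have "E1 (last cs) (hd cs)" using c unfolding ug_cycle_def by simp
    moreover have "last cs \<in> V1" "hd cs \<in> V1" using ne sub by auto
    ultimately show "E2 (last (map f cs)) (hd (map f cs))" using ne assms(4)
      by (simp add: last_map hd_map)
  qed
  thus False using assms(1) by blast
qed

theorem mainTheorem15:
  fixes X :: "(int \<Rightarrow> 'a::finite) set" and V :: "'a list set" and n m :: nat
  assumes "shift_space X"
    and "n \<ge> 1"
    and "finite V"
    and "X_maximal_prefix_code X V"
    and "\<forall>w \<in> lang_ge X m. ext_graph_is_tree X (lang_n X n) V w"
  shows "\<forall>w \<in> lang_ge X m. \<forall>l \<in> lang_ge X (n - 1). l @ w \<in> lang X \<longrightarrow>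
           ext_graph_is_tree X letters V (l @ w)"
proof (intro ballI impI)
  fix w l assume w: "w \<in> lang_ge X m" and l: "l \<in> lang_ge X (n - 1)" and lw: "l @ w \<in> lang X"
  define q where "q = take (n - 1) l"
  define r where "r = drop (n - 1) l"
  have lqr: "l = q @ r" by (simp add: q_def r_def)
  have lq: "length q = n - 1" using l by (simp add: q_def lang_ge_def)
  have rw: "r @ w \<in> lang_ge X m"
    using lang_suffix[of q "r @ w" X] lw w by (simp add: lqr lang_ge_def)
  have lwge: "l @ w \<in> lang_ge X m" using lw w by (simp add: lang_ge_def)
  define f :: "'a list + 'a list \<Rightarrow> 'a list + 'a list" where
    "f = (\<lambda>p. case p of Inl u \<Rightarrow> Inl (u @ q) | Inr v \<Rightarrow> Inr v)"
  have T1: "ext_graph_is_tree X (lang_n X n) V (r @ w)" using assms(5) rw by blast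
have img1: "f ` ext_verts X letters V (l @ w) \<subseteq> ext_verts X (lang_n X n) V (r @ w)"
  proof
    fix p assume "p \<in> f ` ext_verts X letters V (l @ w)"
    then obtain p0 where p0: "p0 \<in> ext_verts X letters V (l @ w)" "p = f p0" by blast
    show "p \<in> ext_verts X (lang_n X n) V (r @ w)"
    proof (cases p0)
      case (Inl u)
      with p0 have "u \<in> letters" "u @ l @ w \<in> lang X"
        by (auto simp: ext_verts_def L_ext_def)
      moreover hence "length u = 1" by (auto simp: letters_def)
      moreover have "(u @ q) @ r @ w = u @ l @ w" by (simp add: lqr)
      moreover have "u @ q \<in> lang X" using \<open>u @ l @ w \<in> lang X\<close>
        by (metis append.assoc lang_prefix lqr)
      ultimately show ?thesis using p0 Inl lq assms(2)
        by (auto simp: ext_verts_def L_ext_def f_def lang_n_def)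
    next
      case (Inr v)
      with p0 have "v \<in> V" "(q @ r @ w) @ v \<in> lang X"
        by (auto simp: ext_verts_def R_ext_def lqr)
      hence "(r @ w) @ v \<in> lang X" using lang_suffix[of q "(r @ w) @ v" X] by simp
      thus ?thesis using p0 Inr \<open>v \<in> V\<close> by (auto simp: ext_verts_def R_ext_def f_def)
    qed
  qed

  have ac: "\<not>(\<exists>cs. ug_cycle (ext_verts X letters V (l @ w)) (ext_adj X letters V (l @ w)) cs)"
  proof (rule acyc_embed[where f = f])
    show "\<not>(\<exists>cs. ug_cycle (ext_verts X (lang_n X n) V (r @ w)) (ext_adj X (lang_n X n) V (r @ w)) cs)"
      using T1 unfolding ext_graph_is_tree_def ug_tree_def by blast
    show "inj_on f (ext_verts X letters V (l @ w))"
      by (auto simp: inj_on_def f_def split: sum.splits)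
    show "f ` ext_verts X letters V (l @ w) \<subseteq> ext_verts X (lang_n X n) V (r @ w)" by (rule img1)
  next
    fix a b assume a: "a \<in> ext_verts X letters V (l @ w)" and b: "b \<in> ext_verts X letters V (l @ w)"
      and e: "ext_adj X letters V (l @ w) a b"
    have fa: "f a \<in> ext_verts X (lang_n X n) V (r @ w)" and fb: "f b \<in> ext_verts X (lang_n X n) V (r @ w)"
      using a b img1 by auto
    from e obtain u v where uv: "(a = Inl u \<and> b = Inr v) \<or> (a = Inr v \<and> b = Inl u)"
      and m: "u @ (l @ w) @ v \<in> lang X" unfolding ext_adj_def by blast
    have "(u @ q) @ (r @ w) @ v \<in> lang X" using m by (simp add: lqr)
    thus "ext_adj X (lang_n X n) V (r @ w) (f a) (f b)"
      using fa fb uv unfolding ext_adj_def f_def by auto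
  qed
  define g :: "'a list + 'a list \<Rightarrow> 'a list + 'a list" where
    "g = (\<lambda>p. case p of Inl u \<Rightarrow> Inl [last u] | Inr v \<Rightarrow> Inr v)"
  have T2: "ext_graph_is_tree X (lang_n X n) V (l @ w)" using assms(5) lwge by blast
  have img: "g ` ext_verts X (lang_n X n) V (l @ w) = ext_verts X letters V (l @ w)"
  proof
    show "g ` ext_verts X (lang_n X n) V (l @ w) \<subseteq> ext_verts X letters V (l @ w)"
    proof
      fix p assume "p \<in> g ` ext_verts X (lang_n X n) V (l @ w)"
      then obtain p0 where p0: "p0 \<in> ext_verts X (lang_n X n) V (l @ w)" "p = g p0" by blast
      show "p \<in> ext_verts X letters V (l @ w)"
      proof (cases p0)
        case (Inl u)
        with p0 have "length u = n" "u @ l @ w \<in> lang X"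
          by (auto simp: ext_verts_def L_ext_def lang_n_def)
        hence "u = butlast u @ [last u]" using assms(2) by (metis append_butlast_last_id list.size(3) not_one_le_zero)
        hence "butlast u @ ([last u] @ l @ w) \<in> lang X" using \<open>u @ l @ w \<in> lang X\<close>
          by (metis append.assoc)
        hence "[last u] @ l @ w \<in> lang X" by (rule lang_suffix)
        thus ?thesis using p0 Inl by (auto simp: ext_verts_def L_ext_def g_def letters_def)
      next
        case (Inr v)
        thus ?thesis using p0 by (auto simp: ext_verts_def R_ext_def g_def)
      qed
    qed
  next
    show "ext_verts X letters V (l @ w) \<subseteq> g ` ext_verts X (lang_n X n) V (l @ w)"
    proof
      fix p assume p: "p \<in> ext_verts X letters V (l @ w)"
      show "p \<in> g ` ext_verts X (lang_n X n) V (l @ w)"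
      proof (cases p)
        case (Inl u)
        with p obtain a where ua: "u = [a]" "[a] @ l @ w \<in> lang X"
          by (auto simp: ext_verts_def L_ext_def letters_def)
        then obtain u' where u': "length u' = n - 1" "u' @ [a] @ l @ w \<in> lang X"
          using lang_left_ext by blast
        have "Inl (u' @ [a]) \<in> ext_verts X (lang_n X n) V (l @ w)"
          using u' assms(2) lang_prefix[of "u' @ [a]" "l @ w" X]
          by (auto simp: ext_verts_def L_ext_def lang_n_def)
        moreover have "g (Inl (u' @ [a])) = p" using Inl ua by (simp add: g_def)
        ultimately show ?thesis by (metis image_eqI)
      next
        case (Inr v)
        hence "g p = p" "p \<in> ext_verts X (lang_n X n) V (l @ w)" using p
          by (auto simp: g_def ext_verts_def R_ext_def)
        thus ?thesis by (metis image_eqI)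
      qed
    qed
  qed
  have co: "ug_connected (ext_verts X letters V (l @ w)) (ext_adj X letters V (l @ w))"
  proof (rule conn_image[OF _ img])
    show "ug_connected (ext_verts X (lang_n X n) V (l @ w)) (ext_adj X (lang_n X n) V (l @ w))"
      using T2 unfolding ext_graph_is_tree_def ug_tree_def by blast
  next
    fix a b assume a: "a \<in> ext_verts X (lang_n X n) V (l @ w)" and b: "b \<in> ext_verts X (lang_n X n) V (l @ w)"
      and e: "ext_adj X (lang_n X n) V (l @ w) a b"
    have ga: "g a \<in> ext_verts X letters V (l @ w)" and gb: "g b \<in> ext_verts X letters V (l @ w)"
      using a b img by auto
    from e obtain u v where uv: "(a = Inl u \<and> b = Inr v) \<or> (a = Inr v \<and> b = Inl u)"
      and m: "u @ (l @ w) @ v \<in> lang X" unfolding ext_adj_def by blast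
    have "u \<in> lang_n X n" using uv a b by (auto simp: ext_verts_def L_ext_def)
    hence "length u = n" by (simp add: lang_n_def)
    hence "u = butlast u @ [last u]" using assms(2) by (metis append_butlast_last_id list.size(3) not_one_le_zero)
    hence "butlast u @ ([last u] @ (l @ w) @ v) \<in> lang X" using m by (metis append.assoc)
    hence "[last u] @ (l @ w) @ v \<in> lang X" by (rule lang_suffix)
    thus "ext_adj X letters V (l @ w) (g a) (g b)"
      using ga gb uv unfolding ext_adj_def g_def by auto
  qed
  show "ext_graph_is_tree X letters V (l @ w)"
    using ac co unfolding ext_graph_is_tree_def ug_tree_def by blast
qed

end
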